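(* Let $n\ge2$ and for $\lambda\in[-1,1]$ let $C_\lambda(\mathbf u)=\prod_{i=1}^n u_i\big[1+\lambda\prod_{i=1}^n(1-u_i)\big]$, $\mathbf u\in[0,1]^n$. Let $\alpha\in\{-1,1\}^n$ and $J=\{i\in\{1,\dots,n\}:\alpha_i=1\}$. If $|J|$ is even, then $C_\lambda$ is $I(\alpha)$ for every $\lambda\in[0,1]$; if $|J|$ is odd, then $C_\lambda$ is $I(\alpha)$ for every $\lambda\in[-1,0]$.
   Context: For $\alpha\in\{-1,1\}^n$ and a random vector $\mathbf X$, write $\alpha\mathbf X=(\alpha_1X_1,\dots,\alpha_nX_n)$; inequalities between vectors are componentwise. $\mathbf X$ is $I(\alpha)$ if for every $\mathbf x\in\mathbb R^n$, $\mathbb P[\alpha\mathbf X>\mathbf x\mid \alpha\mathbf X>\mathbf x']\le \mathbb P[\alpha\mathbf X>\mathbf x\mid \alpha\mathbf X>\mathbf x'']$ whenever $\mathbf x'\le\mathbf x''$ and $\mathbb P[\alpha\mathbf X>\mathbf x'']>0$. A copula is $I(\alpha)$ if a random vector with that distribution function is. $C_\lambda$ is an $n$-copula for each $\lambda\in[-1,1]$. *)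

theory Defs
  imports "HOL-Probability.Probability"
begin

text \<open>Random vectors in R^n are modelled by their distribution: a probability
measure M on the Borel sets of real^'n (the index type 'n is finite, n = CARD('n)).\<close>

definition upper_event :: "real^'n \<Rightarrow> real^'n \<Rightarrow> (real^'n) set" where
  "upper_event \<alpha> x = {y. \<forall>i. \<alpha>$i * y$i > x$i}"

definition cond_prob :: "'a measure \<Rightarrow> 'a set \<Rightarrow> 'a set \<Rightarrow> real" where
  "cond_prob M A B = measure M (A \<inter> B) / measure M B"

definition is_I :: "real^'n \<Rightarrow> (real^'n) measure \<Rightarrow> bool" where
  "is_I \<alpha> M \<longleftrightarrow>
     (\<forall>x x' x''. (\<forall>i. x'$i \<le> x''$i) \<and> measure M (upper_event \<alpha> x'') > 0 \<longrightarrow>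
        cond_prob M (upper_event \<alpha> x) (upper_event \<alpha> x')
          \<le> cond_prob M (upper_event \<alpha> x) (upper_event \<alpha> x''))"

text \<open>M is the distribution of a random vector whose distribution function is the
copula C (C is given on [0,1]^n and extended to R^n by clamping each coordinate).\<close>
definition has_copula_df :: "(real^'n) measure \<Rightarrow> (real^'n \<Rightarrow> real) \<Rightarrow> bool" where
  "has_copula_df M C \<longleftrightarrow> prob_space M \<and> sets M = sets borel \<and>
     (\<forall>x. measure M {y. \<forall>i. y$i \<le> x$i} = C (\<chi> i. max 0 (min 1 (x$i))))"

definition copula_I :: "real^'n \<Rightarrow> (real^'n \<Rightarrow> real) \<Rightarrow> bool" where
  "copula_I \<alpha> C \<longleftrightarrow> (\<forall>M. has_copula_df M C \<longrightarrow> is_I \<alpha> M)"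

definition C_lam :: "real \<Rightarrow> real^'n \<Rightarrow> real" where
  "C_lam l u = (\<Prod>i\<in>UNIV. u$i) * (1 + l * (\<Prod>i\<in>UNIV. 1 - u$i))"

end

theory Submission
  imports Defs
begin

definition FF :: "real \<Rightarrow> real \<Rightarrow> real \<Rightarrow> real \<Rightarrow> real \<Rightarrow> real" where
  "FF \<rho> Bs Bw \<mu> p = min \<rho> p * (1 + \<mu>*(1 - min \<rho> p)*Bw) / (p * (1 + \<mu>*(1-p)*Bs))"

lemma FF_case1:
  assumes "0<p" "p\<le>q" "q\<le>1" "0\<le>Bs" "Bs\<le>Bw" "0\<le>\<mu>" "\<mu>\<le>1" "Bw \<le> 1" "q \<le> \<rho>"
  shows "FF \<rho> Bs Bw \<mu> q \<le> FF \<rho> Bs Bw \<mu> p"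
proof -
  have mp: "min \<rho> p = p" "min \<rho> q = q" using assms by auto
  have cq: "0 \<le> \<mu>*(1-q)" "0 \<le> \<mu>*(1-p)" using assms by auto
  have d1: "0 < 1 + \<mu>*(1-q)*Bs" using cq assms by (simp add: add_pos_nonneg)
  have d2: "0 < 1 + \<mu>*(1-p)*Bs" using cq assms by (simp add: add_pos_nonneg)
  have key: "0 \<le> (\<mu>*(1-p) - \<mu>*(1-q))*(Bw-Bs)"
    using assms by (intro mult_nonneg_nonneg) (auto simp: algebra_simps mult_left_mono)
  have "(1 + \<mu>*(1-q)*Bw)*(1 + \<mu>*(1-p)*Bs) \<le> (1 + \<mu>*(1-p)*Bw)*(1 + \<mu>*(1-q)*Bs)"
    using key by (simp add: algebra_simps)
  hence "(1 + \<mu>*(1-q)*Bw)/(1 + \<mu>*(1-q)*Bs) \<le> (1 + \<mu>*(1-p)*Bw)/(1 + \<mu>*(1-p)*Bs)"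
    using d1 d2 by (simp add: divide_simps)
  moreover have "FF \<rho> Bs Bw \<mu> q = (1 + \<mu>*(1-q)*Bw)/(1 + \<mu>*(1-q)*Bs)"
    using assms by (simp add: FF_def mp)
  moreover have "FF \<rho> Bs Bw \<mu> p = (1 + \<mu>*(1-p)*Bw)/(1 + \<mu>*(1-p)*Bs)"
    using assms by (simp add: FF_def mp)
  ultimately show ?thesis by simp
qed

lemma FF_case2:
  assumes "0<p" "p\<le>q" "q\<le>1" "0\<le>Bs" "Bs\<le>Bw" "0\<le>\<mu>" "\<mu>\<le>1" "Bw \<le> 1" "\<rho> \<le> p" "0 \<le> \<rho>"
  shows "FF \<rho> Bs Bw \<mu> q \<le> FF \<rho> Bs Bw \<mu> p"
proof -
  have mp: "min \<rho> p = \<rho>" "min \<rho> q = \<rho>" using assms by auto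
  have mb: "\<mu>*Bs \<le> 1" using assms by (simp add: mult_le_one)
  have mb0: "0 \<le> \<mu>*Bs" using assms by simp
  have hp: "0 < p * (1 + \<mu>*(1-p)*Bs)" using assms by (simp add: add_pos_nonneg)
  have f: "1 + \<mu>*Bs*(1-p-q) \<ge> 0"
  proof (cases "1-p-q \<ge> 0")
    case True then show ?thesis using mb0 by simp
  next
    case False
    have "\<mu>*Bs*(p+q-1) \<le> 1*1" using mb mb0 False assms by (intro mult_mono) auto
    then show ?thesis by (simp add: algebra_simps)
  qed
  have "q * (1 + \<mu>*(1-q)*Bs) - p * (1 + \<mu>*(1-p)*Bs) = (q-p)*(1 + \<mu>*Bs*(1-p-q))"
    by (simp add: algebra_simps)
  also have "\<dots> \<ge> 0" using f assms by simp
  finally have h: "p * (1 + \<mu>*(1-p)*Bs) \<le> q * (1 + \<mu>*(1-q)*Bs)" by simp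
  have K: "0 \<le> \<rho> * (1 + \<mu>*(1 - \<rho>)*Bw)" using assms by (simp add: add_nonneg_nonneg)
  show ?thesis unfolding FF_def mp
    by (rule divide_left_mono[OF h K]) (use hp h in auto)
qed

lemma FF_mono:
  assumes "0<p" "p\<le>q" "q\<le>1" "0\<le>Bs" "Bs\<le>Bw" "0\<le>\<mu>" "\<mu>\<le>1" "Bw \<le> 1" "0 \<le> \<rho>"
  shows "FF \<rho> Bs Bw \<mu> q \<le> FF \<rho> Bs Bw \<mu> p"
proof (cases "q \<le> \<rho>")
  case True then show ?thesis using FF_case1 assms by blast
next
  case nq: False
  show ?thesis
  proof (cases "\<rho> \<le> p")
    case True then show ?thesis using FF_case2 assms by blast
  next
    case False
    have "FF \<rho> Bs Bw \<mu> q \<le> FF \<rho> Bs Bw \<mu> \<rho>" using FF_case2[of \<rho> q] assms nq False by auto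
    also have "\<dots> \<le> FF \<rho> Bs Bw \<mu> p" using FF_case1[of p \<rho>] assms nq False by auto
    finally show ?thesis .
  qed
qed

definition Gf :: "real \<Rightarrow> ('n::finite \<Rightarrow> real) \<Rightarrow> real" where
  "Gf \<mu> t = (\<Prod>i\<in>UNIV. t i) * (1 + \<mu> * (\<Prod>i\<in>UNIV. 1 - t i))"

lemma prod_split_at: "(\<Prod>i\<in>(UNIV::'n::finite set). f i) = f j * (\<Prod>i\<in>UNIV-{j}. f i)"
  by (simp add: prod.remove)

lemma Gf_split: "Gf \<mu> (t::'n::finite \<Rightarrow> real) =
   t j * (\<Prod>i\<in>UNIV-{j}. t i) * (1 + \<mu> * (1 - t j) * (\<Prod>i\<in>UNIV-{j}. 1 - t i))"
  unfolding Gf_def by (subst (1 2) prod_split_at[of _ j]) (simp add: mult.assoc)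

lemma ratio_step:
  fixes u v r :: "'n::finite \<Rightarrow> real"
  assumes mu: "0\<le>\<mu>" "\<mu>\<le>1" and u: "\<forall>i. 0 < u i" and v1: "\<forall>i. v i \<le> 1"
    and uv: "u j \<le> v j" and eq: "\<forall>i. i\<noteq>j \<longrightarrow> u i = v i" and r: "\<forall>i. 0 \<le> r i"
  shows "Gf \<mu> (\<lambda>i. min (r i) (v i)) / Gf \<mu> v \<le> Gf \<mu> (\<lambda>i. min (r i) (u i)) / Gf \<mu> u"
proof -
  define R where "R = (UNIV::'n set) - {j}"
  define Pw where "Pw = (\<Prod>i\<in>R. min (r i) (u i))"
  define Qw where "Qw = (\<Prod>i\<in>R. 1 - min (r i) (u i))"
  define Pu where "Pu = (\<Prod>i\<in>R. u i)"
  define Qu where "Qu = (\<Prod>i\<in>R. 1 - u i)"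
  have u1: "\<forall>i. u i \<le> 1" using v1 eq uv by (metis order_trans)
  have Pw': "(\<Prod>i\<in>R. min (r i) (v i)) = Pw" unfolding Pw_def R_def
    by (rule prod.cong) (use eq in auto)
  have Qw': "(\<Prod>i\<in>R. 1 - min (r i) (v i)) = Qw" unfolding Qw_def R_def
    by (rule prod.cong) (use eq in auto)
  have Pu': "(\<Prod>i\<in>R. v i) = Pu" unfolding Pu_def R_def
    by (rule prod.cong) (use eq in auto)
  have Qu': "(\<Prod>i\<in>R. 1 - v i) = Qu" unfolding Qu_def R_def
    by (rule prod.cong) (use eq in auto)
  have Pu0: "Pu > 0" unfolding Pu_def using u by (simp add: prod_pos)
  have Pw0: "Pw \<ge> 0" unfolding Pw_def using u r by (intro prod_nonneg) (auto intro: less_imp_le)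
  have Qu0: "Qu \<ge> 0" unfolding Qu_def using u1 by (simp add: prod_nonneg)
  have QuQw: "Qu \<le> Qw" unfolding Qu_def Qw_def using u1 by (intro prod_mono) auto
  have Qw1: "Qw \<le> 1" unfolding Qw_def using u r u1 by (intro prod_le_1) (auto simp: min_le_iff_disj less_imp_le)
  have e1: "Gf \<mu> (\<lambda>i. min (r i) (v i)) / Gf \<mu> v = (Pw/Pu) * FF (r j) Qu Qw \<mu> (v j)"
    unfolding Gf_split[where j=j] FF_def using Pw' Qw' Pu' Qu' unfolding R_def
    by (simp add: ac_simps)
  have e2: "Gf \<mu> (\<lambda>i. min (r i) (u i)) / Gf \<mu> u = (Pw/Pu) * FF (r j) Qu Qw \<mu> (u j)"
    unfolding Gf_split[where j=j] FF_def Pw_def Qw_def Pu_def Qu_def R_def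
    by (simp add: ac_simps)
  have "FF (r j) Qu Qw \<mu> (v j) \<le> FF (r j) Qu Qw \<mu> (u j)"
    using FF_mono[of "u j" "v j" Qu Qw \<mu> "r j"] u v1 uv Qu0 QuQw mu Qw1 r by auto
  then show ?thesis unfolding e1 e2 using Pu0 Pw0 by (intro mult_left_mono) auto
qed

lemma ratio_chain:
  fixes s s' r :: "'n::finite \<Rightarrow> real"
  assumes mu: "0\<le>\<mu>" "\<mu>\<le>1" and s: "\<forall>i. 0 < s i" and ss: "\<forall>i. s i \<le> s' i"
    and s1: "\<forall>i. s' i \<le> 1" and r: "\<forall>i. 0 \<le> r i"
  shows "Gf \<mu> (\<lambda>i. min (r i) (s' i)) / Gf \<mu> s' \<le> Gf \<mu> (\<lambda>i. min (r i) (s i)) / Gf \<mu> s"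
proof -
  define upd where "upd K = (\<lambda>i. if i \<in> K then s' i else s i)" for K
  have "Gf \<mu> (\<lambda>i. min (r i) (upd K i)) / Gf \<mu> (upd K) \<le> Gf \<mu> (\<lambda>i. min (r i) (s i)) / Gf \<mu> s"
    if "finite K" for K
    using that
  proof (induction K rule: finite_induct)
    case empty then show ?case by (simp add: upd_def)
  next
    case (insert j K)
    have "Gf \<mu> (\<lambda>i. min (r i) (upd (insert j K) i)) / Gf \<mu> (upd (insert j K))
       \<le> Gf \<mu> (\<lambda>i. min (r i) (upd K i)) / Gf \<mu> (upd K)"
      apply (rule ratio_step[OF mu, where j=j])
      using s ss s1 r insert(2) unfolding upd_def
      by (auto intro: less_le_trans order_trans)
    with insert.IH show ?case by linarith
  qed
  from this[of UNIV] show ?thesis by (simp add: upd_def)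
qed

definition phi :: "real \<Rightarrow> real" where "phi u = u * (1 - u)"

definition SB :: "'n set \<Rightarrow> real^'n \<Rightarrow> real^'n \<Rightarrow> (real^'n) set" where
  "SB K a b = {y. \<forall>i. (i\<in>K \<longrightarrow> a$i < y$i) \<and> y$i \<le> b$i}"

lemma SB_sets[measurable]: "SB K a b \<in> sets borel"
  unfolding SB_def by measurable

lemma C_lam_eq: "C_lam l b = (\<Prod>i\<in>UNIV. b$i) + l * (\<Prod>i\<in>UNIV. phi (b$i))"
proof -
  have "(\<Prod>i\<in>UNIV. b$i) * (\<Prod>i\<in>UNIV. 1 - b$i) = (\<Prod>i\<in>UNIV. phi (b$i))"
    unfolding phi_def by (simp add: prod.distrib)
  then show ?thesis unfolding C_lam_def by (simp add: algebra_simps)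
qed

lemma box_formula:
  fixes M :: "(real^'n) measure"
  assumes hM: "has_copula_df M (C_lam l)"
    and ab: "\<forall>i. 0 \<le> a$i \<and> a$i \<le> b$i \<and> b$i \<le> 1"
  shows "measure M (SB K a b) = (\<Prod>i\<in>UNIV. if i\<in>K then b$i - a$i else b$i)
            + l * (\<Prod>i\<in>UNIV. if i\<in>K then phi (b$i) - phi (a$i) else phi (b$i))"
proof -
  have P: "prob_space M" and sM: "sets M = sets borel"
    and cdf: "\<And>x. measure M {y. \<forall>i. y$i \<le> x$i} = C_lam l (\<chi> i. max 0 (min 1 (x$i)))"
    using hM unfolding has_copula_df_def by auto
  interpret prob_space M by fact
  have "finite K" by simp
  then show ?thesis using ab
  proof (induction K arbitrary: b rule: finite_induct)
    case empty
    have "(\<chi> i. max 0 (min 1 (b$i))) = b" using empty.prems by (simp add: vec_eq_iff) (metis max.absorb2 order_trans)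
    then show ?case using cdf[of b] by (simp add: SB_def C_lam_eq)
  next
    case (insert j K)
    define b' where "b' = (\<chi> i. if i = j then a$j else b$i)"
    have ab': "\<forall>i. 0 \<le> a$i \<and> a$i \<le> b'$i \<and> b'$i \<le> 1" using insert.prems by (auto simp: b'_def) (metis order_trans)
    have set: "SB (insert j K) a b = SB K a b - SB K a b'"
      unfolding SB_def b'_def by (auto simp: not_le)
    have sub: "SB K a b' \<subseteq> SB K a b" unfolding SB_def b'_def using insert.prems
      by auto (metis order_trans)
    have "measure M (SB (insert j K) a b) = measure M (SB K a b) - measure M (SB K a b')"
      unfolding set using sub sM by (intro finite_measure_Diff) auto
    also have "\<dots> = (\<Prod>i\<in>UNIV. if i\<in>insert j K then b$i - a$i else b$i)
            + l * (\<Prod>i\<in>UNIV. if i\<in>insert j K then phi (b$i) - phi (a$i) else phi (b$i))"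
    proof -
      have b'j: "b'$j = a$j" and b'i: "\<And>i. i \<noteq> j \<Longrightarrow> b'$i = b$i" by (auto simp: b'_def)
      define R1 where "R1 = (\<Prod>i\<in>UNIV-{j}. if i\<in>K then b$i - a$i else b$i)"
      define R2 where "R2 = (\<Prod>i\<in>UNIV-{j}. if i\<in>K then phi (b$i) - phi (a$i) else phi (b$i))"
      have p1: "(\<Prod>i\<in>UNIV. if i\<in>insert j K then b$i - a$i else b$i) = (b$j - a$j) * R1"
        unfolding R1_def by (subst prod_split_at[of _ j]) (auto intro!: prod.cong)
      have p2: "(\<Prod>i\<in>UNIV. if i\<in>K then b$i - a$i else b$i) = b$j * R1"
        unfolding R1_def using insert.hyps(2) by (subst prod_split_at[of _ j]) auto
      have r1: "(\<Prod>i\<in>UNIV-{j}. if i\<in>K then b'$i - a$i else b'$i) = R1"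
        unfolding R1_def by (rule prod.cong) (auto simp: b'i)
      have p3: "(\<Prod>i\<in>UNIV. if i\<in>K then b'$i - a$i else b'$i) = a$j * R1"
        using insert.hyps(2) b'j r1 by (subst prod_split_at[of _ j]) simp
      have q1: "(\<Prod>i\<in>UNIV. if i\<in>insert j K then phi (b$i) - phi (a$i) else phi (b$i)) = (phi (b$j) - phi (a$j)) * R2"
        unfolding R2_def by (subst prod_split_at[of _ j]) (auto intro!: prod.cong)
      have q2: "(\<Prod>i\<in>UNIV. if i\<in>K then phi (b$i) - phi (a$i) else phi (b$i)) = phi (b$j) * R2"
        unfolding R2_def using insert.hyps(2) by (subst prod_split_at[of _ j]) auto
      have r2: "(\<Prod>i\<in>UNIV-{j}. if i\<in>K then phi (b'$i) - phi (a$i) else phi (b'$i)) = R2"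
        unfolding R2_def by (rule prod.cong) (auto simp: b'i)
      have q3: "(\<Prod>i\<in>UNIV. if i\<in>K then phi (b'$i) - phi (a$i) else phi (b'$i)) = phi (a$j) * R2"
        using insert.hyps(2) b'j r2 by (subst prod_split_at[of _ j]) simp
      show ?thesis
        unfolding insert.IH[OF insert.prems] insert.IH[OF ab'] p1 p2 p3 q1 q2 q3
        by (simp add: algebra_simps)
    qed
    finally show ?case .
  qed
qed

definition clamp :: "real \<Rightarrow> real" where "clamp z = max 0 (min 1 z)"

definition tt :: "real^'n \<Rightarrow> real^'n \<Rightarrow> 'n \<Rightarrow> real" where
  "tt \<alpha> x i = (if \<alpha>$i = 1 then 1 - clamp (x$i) else clamp (- x$i))"

lemma Gf_alt: "Gf \<mu> t = (\<Prod>i\<in>UNIV. t i) + \<mu> * (\<Prod>i\<in>UNIV. t i * (1 - t i))"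
proof -
  have "(\<Prod>i\<in>UNIV. t i) * (\<Prod>i\<in>UNIV. 1 - t i) = (\<Prod>i\<in>UNIV. t i * (1 - t i))"
    by (simp add: prod.distrib)
  then show ?thesis unfolding Gf_def by (simp add: algebra_simps)
qed

lemma prod_sign: "(\<Prod>i\<in>(UNIV::'n::finite set). if P i then (-1::real) else 1) = (-1) ^ card {i. P i}"
  by (simp add: prod.If_cases)

lemma coord:
  assumes "a = -1 \<or> a = 1" "0 < y" "y \<le> 1" "y \<noteq> (if a = 1 then 1 else clamp (-x))"
  shows "(a*y > x) \<longleftrightarrow> ((if a = 1 then clamp x else 0) < y \<and> y \<le> (if a = 1 then 1 else clamp (-x)))"
  using assms unfolding clamp_def by (auto simp: max_def min_def)

lemma measure_Q:
  fixes M :: "(real^'n) measure"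
  assumes hM: "has_copula_df M (C_lam l)"
  shows "measure M (SB UNIV 0 1) = 1"
proof -
  have "measure M (SB UNIV 0 1) = 1 + l * (\<Prod>i\<in>(UNIV::'n set). phi 1 - phi 0)"
    using box_formula[OF hM, of 0 1 UNIV] by simp
  also have "\<dots> = 1" by (simp add: phi_def)
  finally show ?thesis .
qed

lemma hyper_null:
  fixes M :: "(real^'n) measure"
  assumes hM: "has_copula_df M (C_lam l)" and card: "CARD('n) \<ge> 2"
  shows "measure M {y. y \<in> SB UNIV 0 1 \<and> y$j = c} = 0"
proof -
  have P: "prob_space M" and sM: "sets M = sets borel"
    using hM unfolding has_copula_df_def by auto
  interpret prob_space M by fact
  define H where "H = {y. y \<in> SB UNIV 0 1 \<and> y$j = c}"
  have Hs: "H \<in> sets M" unfolding H_def sM by measurable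
  obtain i0 where i0: "i0 \<noteq> j"
  proof -
    have "\<not> (\<forall>i. i = (j::'n))"
    proof
      assume "\<forall>i. i = j"
      then have u: "(UNIV::'n set) = {j}" by auto
      have "CARD('n) = card {j}" by (subst u) (rule refl)
      then show False using card by simp
    qed
    then show ?thesis using that by blast
  qed
  show ?thesis
  proof (cases "0 < c \<and> c \<le> 1")
    case False
    then have "H = {}" unfolding H_def SB_def by auto
    then have "measure M H = 0" by simp
    then show ?thesis unfolding H_def .
  next
    case True
    have le: "measure M H \<le> e" if e: "0 < e" "e \<le> c" for e
    proof -
      define a :: "real^'n" where "a = (\<chi> i. if i = j then c - e else 0)"
      define b :: "real^'n" where "b = (\<chi> i. if i = j then c else 1)"
      have ab: "\<forall>i. 0 \<le> a$i \<and> a$i \<le> b$i \<and> b$i \<le> 1" using True e by (auto simp: a_def b_def)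
      have sub: "H \<subseteq> SB UNIV a b" unfolding H_def SB_def a_def b_def using e by auto
      have "measure M H \<le> measure M (SB UNIV a b)"
        using sub sM by (intro finite_measure_mono) auto
      also have "\<dots> = (\<Prod>i\<in>UNIV. b$i - a$i) + l * (\<Prod>i\<in>UNIV. phi (b$i) - phi (a$i))"
        using box_formula[OF hM ab, of UNIV] by simp
      also have "(\<Prod>i\<in>UNIV. b$i - a$i) = e"
        by (subst prod_split_at[of _ j]) (simp add: a_def b_def)
      also have "(\<Prod>i\<in>UNIV. phi (b$i) - phi (a$i)) = 0"
        by (rule prod_zero) (use i0 in \<open>auto simp: a_def b_def phi_def intro!: exI[of _ i0]\<close>)
      finally show ?thesis by simp
    qed
    have "measure M H \<le> 0"
    proof (rule ccontr)
      assume "\<not> measure M H \<le> 0"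
      then have pos: "measure M H > 0" by simp
      have "measure M H \<le> min c (measure M H / 2)" using le[of "min c (measure M H / 2)"] pos True by auto
      then show False using pos by linarith
    qed
    then show ?thesis unfolding H_def by (simp add: measure_nonneg antisym)
  qed
qed

lemma upper_formula:
  fixes M :: "(real^'n) measure" and \<alpha> x :: "real^'n"
  assumes hM: "has_copula_df M (C_lam l)" and card: "CARD('n) \<ge> 2"
    and al: "\<forall>i. \<alpha>$i = -1 \<or> \<alpha>$i = 1"
  shows "measure M (upper_event \<alpha> x) = Gf (l * (-1) ^ card {i. \<alpha>$i = 1}) (tt \<alpha> x)"
proof -
  have P: "prob_space M" and sM: "sets M = sets borel"
    using hM unfolding has_copula_df_def by auto
  interpret prob_space M by fact
  define lo :: "real^'n" where "lo = (\<chi> i. if \<alpha>$i = 1 then clamp (x$i) else 0)"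
  define hi :: "real^'n" where "hi = (\<chi> i. if \<alpha>$i = 1 then 1 else clamp (- x$i))"
  have Qs: "SB UNIV 0 1 \<in> events" using sM by simp
  have AEQ: "AE y in M. y \<in> SB UNIV 0 1"
    using AE_in_set_eq_1[OF Qs] measure_Q[OF hM] by simp
  have AEH: "AE y in M. y$j \<noteq> c" for j c
  proof -
    define H where "H = {y. y \<in> SB UNIV 0 1 \<and> y$j = c}"
    have Hs: "H \<in> sets M" unfolding H_def sM by measurable
    have "measure M H = 0" unfolding H_def by (rule hyper_null[OF hM card])
    then have "H \<in> null_sets M" using Hs by (intro null_setsI) (simp add: emeasure_eq_measure)
    then have "AE y in M. y \<notin> H" by (rule AE_not_in)
    with AEQ show ?thesis unfolding H_def by eventually_elim auto
  qed
  have AEall: "AE y in M. \<forall>i\<in>UNIV. y$i \<noteq> hi$i"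
    by (rule AE_finite_allI) (auto intro: AEH)
  have cl: "0 \<le> clamp z" "clamp z \<le> 1" for z unfolding clamp_def by auto
  have eq: "measure M (upper_event \<alpha> x) = measure M (SB UNIV lo hi)"
  proof (rule finite_measure_eq_AE)
    show "AE y in M. (y \<in> upper_event \<alpha> x) = (y \<in> SB UNIV lo hi)"
      using AEQ AEall
    proof eventually_elim
      case (elim y)
      have c: "(\<alpha>$i*y$i > x$i) \<longleftrightarrow> (lo$i < y$i \<and> y$i \<le> hi$i)" for i
        using coord[of "\<alpha>$i" "y$i" "x$i"] al elim unfolding lo_def hi_def SB_def by auto
      show ?case unfolding upper_event_def SB_def using c by auto
    qed
    show "upper_event \<alpha> x \<in> sets M" unfolding upper_event_def sM by measurable
    show "SB UNIV lo hi \<in> sets M" using sM by simp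
  qed
  have ab: "\<forall>i. 0 \<le> lo$i \<and> lo$i \<le> hi$i \<and> hi$i \<le> 1"
    unfolding lo_def hi_def using cl by auto
  have b: "measure M (SB UNIV lo hi) = (\<Prod>i\<in>UNIV. hi$i - lo$i) + l * (\<Prod>i\<in>UNIV. phi (hi$i) - phi (lo$i))"
    using box_formula[OF hM ab, of UNIV] by simp
  have t1: "(\<Prod>i\<in>UNIV. hi$i - lo$i) = (\<Prod>i\<in>UNIV. tt \<alpha> x i)"
    by (rule prod.cong) (auto simp: hi_def lo_def tt_def)
  have t2: "phi (hi$i) - phi (lo$i) = (if \<alpha>$i = 1 then -1 else 1) * (tt \<alpha> x i * (1 - tt \<alpha> x i))" for i
    by (auto simp: hi_def lo_def tt_def phi_def algebra_simps)
  have t3: "(\<Prod>i\<in>UNIV. phi (hi$i) - phi (lo$i)) = (-1) ^ card {i. \<alpha>$i = 1} * (\<Prod>i\<in>UNIV. tt \<alpha> x i * (1 - tt \<alpha> x i))"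
    unfolding t2 prod.distrib prod_sign ..
  show ?thesis unfolding eq b t1 t3 Gf_alt by (simp add: algebra_simps)
qed

lemma upper_inter: "upper_event \<alpha> x \<inter> upper_event \<alpha> x' = upper_event \<alpha> (\<chi> i. max (x$i) (x'$i))"
  unfolding upper_event_def by auto

lemma tt_max: "\<alpha>$i = -1 \<or> \<alpha>$i = 1 \<Longrightarrow> tt \<alpha> (\<chi> i. max (x$i) (x'$i)) i = min (tt \<alpha> x i) (tt \<alpha> x' i)"
  unfolding tt_def clamp_def by (auto simp: max_def min_def)

lemma tt_mono: "\<alpha>$i = -1 \<or> \<alpha>$i = 1 \<Longrightarrow> x'$i \<le> x''$i \<Longrightarrow> tt \<alpha> x'' i \<le> tt \<alpha> x' i"
  unfolding tt_def clamp_def by (auto simp: max_def min_def)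

lemma tt_bounds: "0 \<le> tt \<alpha> x i" "tt \<alpha> x i \<le> 1"
  unfolding tt_def clamp_def by auto

lemma copula_I_mu:
  fixes \<alpha> :: "real^'n"
  assumes card: "CARD('n) \<ge> 2" and al: "\<forall>i. \<alpha>$i = -1 \<or> \<alpha>$i = 1"
    and mu: "0 \<le> l * (-1) ^ card {i. \<alpha>$i = 1}" "l * (-1) ^ card {i. \<alpha>$i = 1} \<le> 1"
  shows "copula_I \<alpha> (C_lam l)"
  unfolding copula_I_def is_I_def
proof (intro allI impI)
  fix M :: "(real^'n) measure" and x x' x'' :: "real^'n"
  assume hM: "has_copula_df M (C_lam l)"
  assume h: "(\<forall>i. x'$i \<le> x''$i) \<and> 0 < measure M (upper_event \<alpha> x'')"
  define \<mu> where "\<mu> = l * (-1) ^ card {i. \<alpha>$i = 1}"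
  have U: "measure M (upper_event \<alpha> z) = Gf \<mu> (tt \<alpha> z)" for z
    unfolding \<mu>_def by (rule upper_formula[OF hM card al])
  have cp: "cond_prob M (upper_event \<alpha> x) (upper_event \<alpha> z)
      = Gf \<mu> (\<lambda>i. min (tt \<alpha> x i) (tt \<alpha> z i)) / Gf \<mu> (tt \<alpha> z)" for z
  proof -
    have "tt \<alpha> (\<chi> i. max (x$i) (z$i)) = (\<lambda>i. min (tt \<alpha> x i) (tt \<alpha> z i))"
      using tt_max al by blast
    then show ?thesis unfolding cond_prob_def upper_inter U by simp
  qed
  have pos: "\<forall>i. 0 < tt \<alpha> x'' i"
  proof (rule ccontr)
    assume "\<not> (\<forall>i. 0 < tt \<alpha> x'' i)"
    then obtain i where "tt \<alpha> x'' i = 0" using tt_bounds[of \<alpha> x'' ] by (metis less_eq_real_def)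
    then have "(\<Prod>i\<in>UNIV. tt \<alpha> x'' i) = 0" by (intro prod_zero) auto
    then have "Gf \<mu> (tt \<alpha> x'') = 0" unfolding Gf_def by simp
    then show False using h U by simp
  qed
  show "cond_prob M (upper_event \<alpha> x) (upper_event \<alpha> x')
      \<le> cond_prob M (upper_event \<alpha> x) (upper_event \<alpha> x'')"
    unfolding cp
    by (rule ratio_chain) (use mu pos h al tt_bounds in \<open>auto simp: \<mu>_def intro: tt_mono\<close>)
qed

theorem mainTheorem8:
  fixes \<alpha> :: "real^'n"
  assumes "CARD('n) \<ge> 2"
    and "\<forall>i. \<alpha>$i = -1 \<or> \<alpha>$i = 1"
  shows "(even (card {i. \<alpha>$i = 1}) \<longrightarrow> (\<forall>l\<in>{0..1}. copula_I \<alpha> (C_lam l)))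
       \<and> (odd (card {i. \<alpha>$i = 1}) \<longrightarrow> (\<forall>l\<in>{-1..0}. copula_I \<alpha> (C_lam l)))"
proof -
  have e: "even k \<Longrightarrow> (-1::real)^k = 1" "odd k \<Longrightarrow> (-1::real)^k = -1" for k :: nat by auto
  show ?thesis using copula_I_mu[OF assms] e by auto
qed

end
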